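(* Fix $\alpha\in(0,1)$ and any $\theta<0$. Let $t(\alpha)$ be such that the procedure $$D^B_i(\mathbf p)=\mathbb I(p_i\le\alpha)\,\mathbb I\big(\Phi^{-1}(p_1)+\Phi^{-1}(p_2)\le t(\alpha)\big),\quad i=1,2,$$ satisfies $P_{(0,0)}\big(\max(D^B_1,D^B_2)=1\big)=\alpha$. Then $D^B$ is weakly monotone and marginally nominal $\alpha$, controls the FWER in the strong sense at level $\alpha$, and $P_{(\theta,\theta)}\big(\max(D^B_1,D^B_2)=1\big)\ge P_{(\theta,\theta)}\big(\max(D_1,D_2)=1\big)$ for every procedure $D$ that controls the FWER in the strong sense at level $\alpha$ and is either marginally nominal $\alpha$ or weakly monotone. In particular, the same procedure is optimal for every $\theta<0$.
   Context: Model: $\Theta=\mathbb R^2$, $\vartheta=(\theta_1,\theta_2)$, $p_i=\Phi(\theta_i+Z_i)$ with $Z_1,Z_2$ independent standard normal and $\Phi$ the standard normal CDF; the $i$th null is true ($h_i=0$) iff $\theta_i\ge0$. A procedure is a measurable $D=(D_1,D_2):[0,1]^2\to\{0,1\}^2$ ($D_i=1$: reject the $i$th null). Strong FWER control at level $\alpha$: $P_\vartheta(\text{some true null is rejected})\le\alpha$ for all $\vartheta\in\mathbb R^2$. Marginally nominal $\alpha$: $D_i(\mathbf p)=0$ whenever $p_i>\alpha$. Weakly monotone: $D(\mathbf p)\succeq D(\mathbf q)$ (coordinatewise) whenever $\mathbf p\preceq\mathbf q$ (coordinatewise). *)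

theory Defs
  imports "HOL-Probability.Probability"
begin

definition Znorm :: "real measure" where
  "Znorm = density lborel std_normal_density"

definition Z2 :: "(real \<times> real) measure" where
  "Z2 = Znorm \<Otimes>\<^sub>M Znorm"

definition Phi :: "real \<Rightarrow> real" where
  "Phi x = measure Znorm {..x}"

definition Phi_inv :: "real \<Rightarrow> ereal" where
  "Phi_inv p = (if p \<le> 0 then -\<infinity> else if 1 \<le> p then \<infinity> else ereal (THE x. Phi x = p))"

definition pvals :: "real \<times> real \<Rightarrow> real \<times> real \<Rightarrow> real \<times> real" where
  "pvals th z = (Phi (fst th + fst z), Phi (snd th + snd z))"

definition Pr :: "real \<times> real \<Rightarrow> (real \<times> real \<Rightarrow> bool \<times> bool) \<Rightarrow> (bool \<times> bool \<Rightarrow> bool) \<Rightarrow> real" where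
  "Pr th D E = measure Z2 {z \<in> space Z2. E (D (pvals th z))}"

definition unit_sq :: "(real \<times> real) set" where
  "unit_sq = {0..1} \<times> {0..1}"

text \<open>A procedure: measurable map [0,1]^2 -> {0,1}^2 (True = reject).\<close>
definition is_procedure :: "(real \<times> real \<Rightarrow> bool \<times> bool) \<Rightarrow> bool" where
  "is_procedure D \<longleftrightarrow> D \<in> restrict_space borel unit_sq \<rightarrow>\<^sub>M count_space UNIV"

text \<open>Some true null (theta_i \<ge> 0) is rejected.\<close>
definition false_rej :: "real \<times> real \<Rightarrow> bool \<times> bool \<Rightarrow> bool" where
  "false_rej th d \<longleftrightarrow> (fst th \<ge> 0 \<and> fst d) \<or> (snd th \<ge> 0 \<and> snd d)"

definition strong_fwer :: "real \<Rightarrow> (real \<times> real \<Rightarrow> bool \<times> bool) \<Rightarrow> bool" where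
  "strong_fwer \<alpha> D \<longleftrightarrow> (\<forall>th. Pr th D (false_rej th) \<le> \<alpha>)"

definition marg_nominal :: "real \<Rightarrow> (real \<times> real \<Rightarrow> bool \<times> bool) \<Rightarrow> bool" where
  "marg_nominal \<alpha> D \<longleftrightarrow> (\<forall>p\<in>unit_sq. (fst p > \<alpha> \<longrightarrow> \<not> fst (D p)) \<and> (snd p > \<alpha> \<longrightarrow> \<not> snd (D p)))"

definition weakly_monotone :: "(real \<times> real \<Rightarrow> bool \<times> bool) \<Rightarrow> bool" where
  "weakly_monotone D \<longleftrightarrow> (\<forall>p\<in>unit_sq. \<forall>q\<in>unit_sq. fst p \<le> fst q \<and> snd p \<le> snd q \<longrightarrow>
      (fst (D q) \<longrightarrow> fst (D p)) \<and> (snd (D q) \<longrightarrow> snd (D p)))"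

definition DB :: "real \<Rightarrow> real \<Rightarrow> real \<times> real \<Rightarrow> bool \<times> bool" where
  "DB \<alpha> t p = (fst p \<le> \<alpha> \<and> Phi_inv (fst p) + Phi_inv (snd p) \<le> ereal t,
                 snd p \<le> \<alpha> \<and> Phi_inv (fst p) + Phi_inv (snd p) \<le> ereal t)"

definition any_rej :: "bool \<times> bool \<Rightarrow> bool" where
  "any_rej d \<longleftrightarrow> fst d \<or> snd d"

end

theory Submission
  imports Defs
begin

lemma Znorm_prob: "prob_space Znorm"
  unfolding Znorm_def by (rule prob_space_normal_density) simp

lemma sets_Znorm[measurable_cong, simp]: "sets Znorm = sets borel"
  unfolding Znorm_def by simp

lemma space_Znorm[simp]: "space Znorm = UNIV"
  unfolding Znorm_def by simp

interpretation Zn: real_distribution Znorm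
  by (simp add: real_distribution_def real_distribution_axioms_def Znorm_prob)

lemma Phi_cdf: "Phi = cdf Znorm"
  unfolding Phi_def[abs_def] cdf_def by simp

lemma Phi_mono: "x \<le> y \<Longrightarrow> Phi x \<le> Phi y"
  unfolding Phi_cdf by (rule Zn.cdf_nondecreasing)

lemma Phi_cont: "isCont Phi x"
proof -
  have "emeasure Znorm {x} = (\<integral>\<^sup>+ y. ennreal (std_normal_density y) * indicator {x} y \<partial>lborel)"
    unfolding Znorm_def by (rule emeasure_density) auto
  also have "\<dots> = 0"
    by (rule nn_integral_null_set) (auto simp: null_sets_def)
  finally have "measure Znorm {x} = 0" by (simp add: measure_def)
  then show ?thesis unfolding Phi_cdf using Zn.isCont_cdf by blast
qed

lemma Phi_top: "(Phi \<longlongrightarrow> 1) at_top"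
  unfolding Phi_cdf by (rule Zn.cdf_lim_at_top_prob)

lemma Phi_bot: "(Phi \<longlongrightarrow> 0) at_bot"
  unfolding Phi_cdf by (rule Zn.cdf_lim_at_bot)

lemma Phi_strict: assumes "x < y" shows "Phi x < Phi y"
proof -
  define m where "m = \<bar>x\<bar> + \<bar>y\<bar>"
  have pos: "0 < std_normal_density m" by (rule normal_density_pos) simp
  have le: "std_normal_density m \<le> std_normal_density z" if "x \<le> z" "z \<le> y" for z
  proof -
    have "\<bar>z\<bar> \<le> m" using that unfolding m_def by linarith
    then have "z\<^sup>2 \<le> m\<^sup>2" by (metis abs_ge_zero power2_abs power_mono)
    then show ?thesis unfolding std_normal_density_def by (auto intro!: divide_right_mono)
  qed
  have "ennreal (std_normal_density m * (y - x)) = (\<integral>\<^sup>+ z. ennreal (std_normal_density m) * indicator {x<..y} z \<partial>lborel)"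
    using assms by (simp add: nn_integral_cmult_indicator ennreal_mult)
  also have "\<dots> \<le> (\<integral>\<^sup>+ z. ennreal (std_normal_density z) * indicator {x<..y} z \<partial>lborel)"
    by (intro nn_integral_mono) (auto split: split_indicator intro!: ennreal_leI le)
  also have "\<dots> = emeasure Znorm {x<..y}"
    unfolding Znorm_def by (rule emeasure_density[symmetric]) auto
  finally have "std_normal_density m * (y - x) \<le> measure Znorm {x<..y}"
    by (simp add: Zn.emeasure_eq_measure)
  moreover have "0 < std_normal_density m * (y - x)" using pos assms by simp
  ultimately have "0 < measure Znorm {x<..y}" by linarith
  with Zn.cdf_diff_eq[OF assms] show ?thesis unfolding Phi_cdf by simp
qed

lemma Phi_strict_iff: "Phi x < Phi y \<longleftrightarrow> x < y"
  by (metis Phi_mono Phi_strict not_le)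
lemma Phi_le_iff: "Phi x \<le> Phi y \<longleftrightarrow> x \<le> y"
  by (metis Phi_strict_iff not_le)
lemma Phi_inj: "Phi x = Phi y \<longleftrightarrow> x = y"
  by (metis Phi_le_iff order_antisym order_refl)

lemma Phi_pos: "0 < Phi x"
proof -
  have "0 \<le> Phi (x - 1)" unfolding Phi_cdf by (rule Zn.cdf_nonneg)
  also have "\<dots> < Phi x" by (rule Phi_strict) simp
  finally show ?thesis .
qed

lemma Phi_lt1: "Phi x < 1"
proof -
  have "Phi x < Phi (x + 1)" by (rule Phi_strict) simp
  also have "\<dots> \<le> 1" unfolding Phi_cdf by (rule Zn.cdf_bounded_prob)
  finally show ?thesis .
qed

lemma Phi_surj: assumes "0 < p" "p < 1" shows "\<exists>x. Phi x = p"
proof -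
  from order_tendstoD(2)[OF Phi_bot assms(1)] obtain a where a: "\<And>x. x \<le> a \<Longrightarrow> Phi x < p"
    by (auto simp: eventually_at_bot_linorder)
  from order_tendstoD(1)[OF Phi_top assms(2)] obtain b where b: "\<And>x. x \<ge> b \<Longrightarrow> Phi x > p"
    by (auto simp: eventually_at_top_linorder)
  define a' where "a' = min a b"
  have "Phi a' \<le> p" "p \<le> Phi b" "a' \<le> b" using a[of a'] b[of b] by (auto simp: a'_def)
  then show ?thesis using IVT[of Phi a' p b] Phi_cont by auto
qed

definition Q :: "real \<Rightarrow> real" where "Q p = (THE x. Phi x = p)"

lemma Phi_Q: assumes "0 < p" "p < 1" shows "Phi (Q p) = p"
proof -
  from Phi_surj[OF assms] obtain x where "Phi x = p" by blast
  then have "\<exists>!x. Phi x = p" by (metis Phi_inj)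
  then show ?thesis unfolding Q_def by (rule theI')
qed

lemma Q_Phi: "Q (Phi x) = x"
proof -
  have "Phi (Q (Phi x)) = Phi x" by (rule Phi_Q[OF Phi_pos Phi_lt1])
  then show ?thesis by (simp add: Phi_inj)
qed

lemma Phi_le_Q: assumes "0 < p" "p < 1" shows "Phi x \<le> p \<longleftrightarrow> x \<le> Q p"
  using Phi_le_iff[of x "Q p"] Phi_Q[OF assms] by simp

lemma Phi_inv_Phi: "Phi_inv (Phi x) = ereal x"
  using Phi_pos[of x] Phi_lt1[of x] by (simp add: Phi_inv_def Q_def[symmetric] Q_Phi)

lemma Phi_inv_mono: assumes "p \<le> q" shows "Phi_inv p \<le> Phi_inv q"
proof -
  { assume "0 < p" "q < 1"
    then have "Q p \<le> Q q"
      using Phi_le_iff[of "Q p" "Q q"] Phi_Q[of p] Phi_Q[of q] assms by simp }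
  then show ?thesis using assms by (auto simp: Phi_inv_def Q_def[symmetric])
qed

lemma Phi_meas[measurable]: "Phi \<in> borel_measurable borel"
  by (rule borel_measurable_mono) (auto simp: mono_def Phi_mono)

lemma Q_mono: "0 < p \<Longrightarrow> p \<le> q \<Longrightarrow> q < 1 \<Longrightarrow> Q p \<le> Q q"
  using Phi_le_iff[of "Q p" "Q q"] Phi_Q[of p] Phi_Q[of q] by simp

lemma Phi_inv_meas[measurable]: "Phi_inv \<in> borel_measurable borel"
proof -
  define h where "h p = (if 0 < p \<and> p < 1 then Q p else 0)" for p
  have h[measurable]: "h \<in> borel_measurable borel"
    by (rule borel_measurable_piecewise_mono[of "{{..0}, {0<..<1}, {1..}}"])
       (auto simp: h_def mono_on_def Q_mono)
  have "Phi_inv = (\<lambda>p. if p \<le> 0 then -\<infinity> else if 1 \<le> p then \<infinity> else ereal (h p))"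
    by (auto simp: Phi_inv_def h_def Q_def fun_eq_iff)
  moreover have "(\<lambda>p. if p \<le> 0 then -\<infinity> else if 1 \<le> p then \<infinity> else ereal (h p)) \<in> borel_measurable borel"
    by measurable
  ultimately show ?thesis by simp
qed


lemma fst_meas[measurable]: "fst \<in> borel_measurable (borel :: (real \<times> real) measure)"
  by (intro borel_measurable_continuous_onI continuous_on_fst continuous_on_id)

lemma snd_meas[measurable]: "snd \<in> borel_measurable (borel :: (real \<times> real) measure)"
  by (intro borel_measurable_continuous_onI continuous_on_snd continuous_on_id)

interpretation Zn2: pair_prob_space Znorm Znorm
  by (simp add: pair_prob_space_def pair_sigma_finite_def Znorm_prob prob_space_imp_sigma_finite)

lemma Z2_prob: "prob_space Z2" unfolding Z2_def by (rule Zn2.P.prob_space_axioms)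

interpretation Z2p: prob_space Z2 by (rule Z2_prob)

lemma sets_Z2[measurable_cong, simp]: "sets Z2 = sets (borel :: (real \<times> real) measure)"
  unfolding Z2_def borel_prod[symmetric] by (rule sets_pair_measure_cong) simp_all

lemma space_Z2[simp]: "space Z2 = UNIV"
  using sets_eq_imp_space_eq[OF sets_Z2] by simp

lemma Z2_density: "Z2 = density lborel (\<lambda>z. ennreal (std_normal_density (fst z)) * ennreal (std_normal_density (snd z)))"
proof -
  have "Z2 = density (lborel \<Otimes>\<^sub>M lborel) (\<lambda>(x,y). ennreal (std_normal_density x) * ennreal (std_normal_density y))"
    unfolding Z2_def Znorm_def
    by (rule pair_measure_density) (auto simp: sigma_finite_lborel intro!: prob_space_imp_sigma_finite prob_space_normal_density)
  then show ?thesis by (simp add: lborel_prod case_prod_unfold)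
qed

definition w :: "real \<Rightarrow> real \<times> real \<Rightarrow> ennreal" where
  "w c z = ennreal (exp (c * (fst z + snd z) - c\<^sup>2))"

lemma w_meas[measurable]: "w c \<in> borel_measurable borel"
  unfolding w_def[abs_def] by measurable

lemma dens_shift: "std_normal_density (x - c) * std_normal_density (y - c)
   = std_normal_density x * std_normal_density y * exp (c * (x + y) - c\<^sup>2)"
proof -
  have e: "- (x - c)\<^sup>2 / 2 + - (y - c)\<^sup>2 / 2 = - x\<^sup>2 / 2 + - y\<^sup>2 / 2 + (c * (x + y) - c\<^sup>2)"
    by (simp add: power2_eq_square field_simps)
  have "exp (- (x - c)\<^sup>2 / 2) * exp (- (y - c)\<^sup>2 / 2) = exp (- x\<^sup>2 / 2) * exp (- y\<^sup>2 / 2) * exp (c * (x + y) - c\<^sup>2)"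
    unfolding mult_exp_exp e ..
  then show ?thesis unfolding std_normal_density_def by (simp add: field_simps)
qed

lemma Z2_shift:
  fixes S :: "(real \<times> real) set" assumes S[measurable]: "S \<in> sets borel"
  shows "emeasure Z2 {z. (fst z + c, snd z + c) \<in> S} = (\<integral>\<^sup>+z. w c z * indicator S z \<partial>Z2)"
proof -
  define g where "g z = ennreal (std_normal_density (fst z)) * ennreal (std_normal_density (snd z))" for z :: "real \<times> real"
  have g[measurable]: "g \<in> borel_measurable borel" unfolding g_def[abs_def] by measurable
  have Zd: "Z2 = density lborel g" unfolding g_def[abs_def] by (rule Z2_density)
  define v where "v = (c, c)"
  have "emeasure Z2 {z. (fst z + c, snd z + c) \<in> S} = (\<integral>\<^sup>+z. g z * indicator S (v + z) \<partial>lborel)"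
    unfolding Zd by (subst emeasure_density) (auto intro!: nn_integral_cong split: split_indicator simp: v_def add.commute)
  also have "\<dots> = (\<integral>\<^sup>+z. g (- v + z) * indicator S z \<partial>distr lborel borel ((+) v))"
    by (subst nn_integral_distr) auto
  also have "\<dots> = (\<integral>\<^sup>+z. g (- v + z) * indicator S z \<partial>lborel)"
    by (simp add: lborel_distr_plus)
  also have "\<dots> = (\<integral>\<^sup>+z. g z * (w c z * indicator S z) \<partial>lborel)"
  proof (intro nn_integral_cong)
    fix z :: "real \<times> real"
    have "g (- v + z) = ennreal (std_normal_density (fst z - c) * std_normal_density (snd z - c))"
      by (simp add: g_def v_def ennreal_mult)
    also have "\<dots> = g z * w c z"
      by (simp add: dens_shift g_def w_def ennreal_mult)
    finally show "g (- v + z) * indicator S z = g z * (w c z * indicator S z)" by (simp add: mult.assoc)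
  qed
  also have "\<dots> = (\<integral>\<^sup>+z. w c z * indicator S z \<partial>Z2)"
    unfolding Zd by (rule nn_integral_density[symmetric]) auto
  finally show ?thesis .
qed

lemma Z2_times: "A \<in> sets borel \<Longrightarrow> B \<in> sets borel \<Longrightarrow> measure Z2 (A \<times> B) = measure Znorm A * measure Znorm B"
  unfolding Z2_def measure_def
  by (simp add: Zn.emeasure_pair_measure_Times enn2real_mult)

lemma meas_Iic: "measure Znorm {..a} = Phi a" by (simp add: Phi_def)

lemma Phi_unit: "(Phi a, Phi b) \<in> unit_sq"
  using Phi_pos[of a] Phi_lt1[of a] Phi_pos[of b] Phi_lt1[of b] by (simp add: unit_sq_def)

lemma pvals_unit: "pvals th z \<in> unit_sq"
  by (simp add: pvals_def Phi_unit)

lemma DB_mono: "weakly_monotone (DB \<alpha> t)"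
  unfolding weakly_monotone_def DB_def
proof (intro ballI impI)
  fix p q :: "real \<times> real"
  assume le: "fst p \<le> fst q \<and> snd p \<le> snd q"
  then have "Phi_inv (fst p) + Phi_inv (snd p) \<le> Phi_inv (fst q) + Phi_inv (snd q)"
    by (intro add_mono Phi_inv_mono) auto
  then show "(fst (fst q \<le> \<alpha> \<and> Phi_inv (fst q) + Phi_inv (snd q) \<le> ereal t,
              snd q \<le> \<alpha> \<and> Phi_inv (fst q) + Phi_inv (snd q) \<le> ereal t) \<longrightarrow>
         fst (fst p \<le> \<alpha> \<and> Phi_inv (fst p) + Phi_inv (snd p) \<le> ereal t,
              snd p \<le> \<alpha> \<and> Phi_inv (fst p) + Phi_inv (snd p) \<le> ereal t)) \<and>
        (snd (fst q \<le> \<alpha> \<and> Phi_inv (fst q) + Phi_inv (snd q) \<le> ereal t,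
              snd q \<le> \<alpha> \<and> Phi_inv (fst q) + Phi_inv (snd q) \<le> ereal t) \<longrightarrow>
         snd (fst p \<le> \<alpha> \<and> Phi_inv (fst p) + Phi_inv (snd p) \<le> ereal t,
              snd p \<le> \<alpha> \<and> Phi_inv (fst p) + Phi_inv (snd p) \<le> ereal t))"
    using le by (auto intro: order_trans)
qed

lemma DB_marg: "marg_nominal \<alpha> (DB \<alpha> t)"
  by (auto simp: marg_nominal_def DB_def)

lemma DB_proc: "is_procedure (DB \<alpha> t)"
proof -
  have "DB \<alpha> t \<in> borel \<rightarrow>\<^sub>M count_space UNIV \<Otimes>\<^sub>M count_space UNIV"
    unfolding DB_def[abs_def] by measurable
  then have "DB \<alpha> t \<in> borel \<rightarrow>\<^sub>M count_space UNIV"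
    by (simp add: pair_measure_countable)
  then show ?thesis unfolding is_procedure_def by (rule measurable_restrict_space1)
qed

lemma pvals_meas: "pvals th \<in> Z2 \<rightarrow>\<^sub>M restrict_space borel unit_sq"
proof (rule measurable_restrict_space2)
  show "pvals th \<in> space Z2 \<rightarrow> unit_sq" using pvals_unit by auto
  show "pvals th \<in> Z2 \<rightarrow>\<^sub>M borel" unfolding pvals_def[abs_def] by measurable
qed

lemma Phi2_meas: "(\<lambda>x::real\<times>real. (Phi (fst x), Phi (snd x))) \<in> borel \<rightarrow>\<^sub>M restrict_space borel unit_sq"
proof (rule measurable_restrict_space2)
  show "(\<lambda>x::real\<times>real. (Phi (fst x), Phi (snd x))) \<in> space borel \<rightarrow> unit_sq" using Phi_unit by auto
  show "(\<lambda>x::real\<times>real. (Phi (fst x), Phi (snd x))) \<in> borel \<rightarrow>\<^sub>M borel" by measurable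
qed

lemma pred_sets_gen:
  assumes "f \<in> M \<rightarrow>\<^sub>M restrict_space borel unit_sq" "is_procedure D"
  shows "{x \<in> space M. E (D (f x))} \<in> sets M"
proof -
  have "(\<lambda>x. D (f x)) \<in> M \<rightarrow>\<^sub>M count_space UNIV"
    using measurable_comp[OF assms(1) assms(2)[unfolded is_procedure_def]] by (simp add: comp_def)
  moreover have "E \<in> count_space UNIV \<rightarrow>\<^sub>M count_space UNIV" by simp
  ultimately have "(\<lambda>x. E (D (f x))) \<in> M \<rightarrow>\<^sub>M count_space UNIV"
    using measurable_comp by (fastforce simp: comp_def)
  from measurable_sets[OF this, of "{True}"] show ?thesis
    by (simp add: vimage_def Int_def conj_commute)
qed

lemma ev_meas: "is_procedure D \<Longrightarrow> {z \<in> space Z2. E (D (pvals th z))} \<in> sets Z2"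
  by (rule pred_sets_gen[OF pvals_meas])

lemma ev_meas': "is_procedure D \<Longrightarrow> {z. E (D (pvals th z))} \<in> sets borel"
  using ev_meas[of D E th] by simp

lemma S_meas: "is_procedure D \<Longrightarrow> {x::real\<times>real. E (D (Phi (fst x), Phi (snd x)))} \<in> sets borel"
  using pred_sets_gen[OF Phi2_meas, of D E] by simp

lemma Pr_shift: "Pr (a, b) D E = measure Z2 {z. (fst z + a, snd z + b) \<in> {x. E (D (Phi (fst x), Phi (snd x)))}}"
  by (simp add: Pr_def pvals_def add.commute)

lemma times_borel: "A \<in> sets borel \<Longrightarrow> B \<in> sets borel \<Longrightarrow> A \<times> B \<in> sets (borel :: (real \<times> real) measure)"
proof -
  assume "A \<in> sets borel" "B \<in> sets borel"
  then have "A \<times> B \<in> sets ((borel::real measure) \<Otimes>\<^sub>M (borel::real measure))" by (rule pair_measureI)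
  then show ?thesis by (metis borel_prod)
qed

lemma half_aux: "0 < (x::real) \<Longrightarrow> x < 1 \<Longrightarrow> 0 < (1+x)/2 \<and> (1+x)/2 < 1 \<and> x < (1+x)/2"
  by auto

lemma rej1:
  assumes proc: "is_procedure D" and fw: "strong_fwer \<alpha> D" and mono: "weakly_monotone D"
    and p: "0 < p1" "p1 < 1" "0 < p2" "p2 < 1" and r: "fst (D (p1, p2))" and a: "0 < \<alpha>"
  shows "p1 \<le> \<alpha>"
proof (rule ccontr)
  assume "\<not> p1 \<le> \<alpha>" then have gt: "\<alpha> < p1" by simp
  define r where "r = (1 + \<alpha> / p1) / 2"
  have q: "\<alpha> / p1 < 1" using gt p by simp
  have pos: "0 < \<alpha> / p1" using a p by simp
  have r0: "0 < r" "r < 1" "\<alpha> / p1 < r" using half_aux[OF pos q] unfolding r_def by auto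
  have prod: "\<alpha> < p1 * r" using r0(3) p(1) by (simp add: pos_divide_less_eq mult.commute)
  define th2 where "th2 = Q p2 - Q r"
  define E where "E = {z \<in> space Z2. false_rej (0, th2) (D (pvals (0, th2) z))}"
  have m: "\<And>pp qq. pp \<in> unit_sq \<Longrightarrow> qq \<in> unit_sq \<Longrightarrow> fst pp \<le> fst qq \<Longrightarrow> snd pp \<le> snd qq \<Longrightarrow> fst (D qq) \<Longrightarrow> fst (D pp)"
    using mono unfolding weakly_monotone_def by blast
  have pq: "(p1, p2) \<in> unit_sq" using p by (simp add: unit_sq_def)
  have sub: "{..Q p1} \<times> {..Q r} \<subseteq> E"
  proof
    fix z assume "z \<in> {..Q p1} \<times> {..Q r}"
    then have z1: "fst z \<le> Q p1" and z2: "snd z \<le> Q r" by auto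
    have 1: "Phi (fst z) \<le> p1" using z1 Phi_le_Q p by auto
    have "th2 + snd z \<le> Q p2" using z2 unfolding th2_def by simp
    then have 2: "Phi (th2 + snd z) \<le> p2" using Phi_le_Q p by auto
    have "fst (D (Phi (fst z), Phi (th2 + snd z)))"
      by (rule m[OF Phi_unit pq]) (use 1 2 r in auto)
    then show "z \<in> E" by (simp add: E_def false_rej_def pvals_def)
  qed
  have "measure Z2 ({..Q p1} \<times> {..Q r}) = p1 * r"
    using Z2_times meas_Iic Phi_Q p r0 by simp
  moreover have "measure Z2 ({..Q p1} \<times> {..Q r}) \<le> measure Z2 E"
    by (rule Z2p.finite_measure_mono[OF sub]) (simp add: E_def ev_meas'[OF proc])
  moreover have "measure Z2 E \<le> \<alpha>" using fw unfolding strong_fwer_def Pr_def E_def by blast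
  ultimately show False using prod by simp
qed

lemma rej2:
  assumes proc: "is_procedure D" and fw: "strong_fwer \<alpha> D" and mono: "weakly_monotone D"
    and p: "0 < p1" "p1 < 1" "0 < p2" "p2 < 1" and r: "snd (D (p1, p2))" and a: "0 < \<alpha>"
  shows "p2 \<le> \<alpha>"
proof (rule ccontr)
  assume "\<not> p2 \<le> \<alpha>" then have gt: "\<alpha> < p2" by simp
  define r where "r = (1 + \<alpha> / p2) / 2"
  have q: "\<alpha> / p2 < 1" using gt p by simp
  have pos: "0 < \<alpha> / p2" using a p by simp
  have r0: "0 < r" "r < 1" "\<alpha> / p2 < r" using half_aux[OF pos q] unfolding r_def by auto
  have prod: "\<alpha> < r * p2" using r0(3) p(3) by (simp add: pos_divide_less_eq mult.commute)
  define th1 where "th1 = Q p1 - Q r"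
  define E where "E = {z \<in> space Z2. false_rej (th1, 0) (D (pvals (th1, 0) z))}"
  have m: "\<And>pp qq. pp \<in> unit_sq \<Longrightarrow> qq \<in> unit_sq \<Longrightarrow> fst pp \<le> fst qq \<Longrightarrow> snd pp \<le> snd qq \<Longrightarrow> snd (D qq) \<Longrightarrow> snd (D pp)"
    using mono unfolding weakly_monotone_def by blast
  have pq: "(p1, p2) \<in> unit_sq" using p by (simp add: unit_sq_def)
  have sub: "{..Q r} \<times> {..Q p2} \<subseteq> E"
  proof
    fix z assume "z \<in> {..Q r} \<times> {..Q p2}"
    then have z1: "fst z \<le> Q r" and z2: "snd z \<le> Q p2" by auto
    have 2: "Phi (snd z) \<le> p2" using z2 Phi_le_Q p by auto
    have "th1 + fst z \<le> Q p1" using z1 unfolding th1_def by simp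
    then have 1: "Phi (th1 + fst z) \<le> p1" using Phi_le_Q p by auto
    have "snd (D (Phi (th1 + fst z), Phi (snd z)))"
      by (rule m[OF Phi_unit pq]) (use 1 2 r in auto)
    then show "z \<in> E" by (simp add: E_def false_rej_def pvals_def)
  qed
  have "measure Z2 ({..Q r} \<times> {..Q p2}) = r * p2"
    using Z2_times meas_Iic Phi_Q p r0 by simp
  moreover have "measure Z2 ({..Q r} \<times> {..Q p2}) \<le> measure Z2 E"
    by (rule Z2p.finite_measure_mono[OF sub]) (simp add: E_def ev_meas'[OF proc])
  moreover have "measure Z2 E \<le> \<alpha>" using fw unfolding strong_fwer_def Pr_def E_def by blast
  ultimately show False using prod by simp
qed

lemma rejM:
  assumes proc: "is_procedure D" and fw: "strong_fwer \<alpha> D" and mm: "marg_nominal \<alpha> D \<or> weakly_monotone D"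
    and a: "0 < \<alpha>" and r: "any_rej (D (Phi x1, Phi x2))"
  shows "Phi x1 \<le> \<alpha> \<or> Phi x2 \<le> \<alpha>"
proof -
  have u: "(Phi x1, Phi x2) \<in> unit_sq" by (rule Phi_unit)
  from mm show ?thesis
  proof
    assume "marg_nominal \<alpha> D"
    then show ?thesis using u r unfolding marg_nominal_def any_rej_def by force
  next
    assume mono: "weakly_monotone D"
    from r consider "fst (D (Phi x1, Phi x2))" | "snd (D (Phi x1, Phi x2))" unfolding any_rej_def by blast
    then show ?thesis
    proof cases
      case 1 then show ?thesis using rej1[OF proc fw mono Phi_pos Phi_lt1 Phi_pos Phi_lt1 _ a] by blast
    next
      case 2 then show ?thesis using rej2[OF proc fw mono Phi_pos Phi_lt1 Phi_pos Phi_lt1 _ a] by blast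
    qed
  qed
qed

lemma NP:
  fixes c t :: real and B D M :: "(real \<times> real) set"
  assumes c: "c < 0" and B: "B = M \<inter> {x. fst x + snd x \<le> t}" and DM: "D \<subseteq> M"
    and Bm[measurable]: "B \<in> sets borel" and Dm[measurable]: "D \<in> sets borel"
    and le: "measure Z2 D \<le> measure Z2 B"
  shows "(\<integral>\<^sup>+z. w c z * indicator D z \<partial>Z2) \<le> (\<integral>\<^sup>+z. w c z * indicator B z \<partial>Z2)"
proof -
  define k where "k = exp (c * t - c\<^sup>2)"
  have splitB: "(\<integral>\<^sup>+z. w c z * indicator B z \<partial>Z2) = (\<integral>\<^sup>+z. w c z * indicator (B \<inter> D) z \<partial>Z2) + (\<integral>\<^sup>+z. w c z * indicator (B - D) z \<partial>Z2)"
    by (subst nn_integral_add[symmetric]) (auto intro!: nn_integral_cong split: split_indicator)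
  have splitD: "(\<integral>\<^sup>+z. w c z * indicator D z \<partial>Z2) = (\<integral>\<^sup>+z. w c z * indicator (B \<inter> D) z \<partial>Z2) + (\<integral>\<^sup>+z. w c z * indicator (D - B) z \<partial>Z2)"
    by (subst nn_integral_add[symmetric]) (auto intro!: nn_integral_cong split: split_indicator)
  have I1: "(\<integral>\<^sup>+z. w c z * indicator (D - B) z \<partial>Z2) \<le> (\<integral>\<^sup>+z. ennreal k * indicator (D - B) z \<partial>Z2)"
  proof (intro nn_integral_mono)
    fix z :: "real \<times> real"
    show "w c z * indicator (D - B) z \<le> ennreal k * indicator (D - B) z"
    proof (cases "z \<in> D - B")
      case True
      then have "z \<in> M" "t < fst z + snd z" using DM B by auto
      then have "c * (fst z + snd z) \<le> c * t" using c by (simp add: mult_le_cancel_left)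
      then have "w c z \<le> ennreal k" unfolding w_def k_def by (intro ennreal_leI) simp
      then show ?thesis using True by simp
    qed simp
  qed
  also have "\<dots> = ennreal k * emeasure Z2 (D - B)" by (rule nn_integral_cmult_indicator) simp
  finally have I1': "(\<integral>\<^sup>+z. w c z * indicator (D - B) z \<partial>Z2) \<le> ennreal k * emeasure Z2 (D - B)" .
  have "ennreal k * emeasure Z2 (B - D) = (\<integral>\<^sup>+z. ennreal k * indicator (B - D) z \<partial>Z2)"
    by (rule nn_integral_cmult_indicator[symmetric]) simp
  also have "\<dots> \<le> (\<integral>\<^sup>+z. w c z * indicator (B - D) z \<partial>Z2)"
  proof (intro nn_integral_mono)
    fix z :: "real \<times> real"
    show "ennreal k * indicator (B - D) z \<le> w c z * indicator (B - D) z"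
    proof (cases "z \<in> B - D")
      case True
      then have "fst z + snd z \<le> t" using B by auto
      then have "c * t \<le> c * (fst z + snd z)" using c by (simp add: mult_le_cancel_left)
      then have "ennreal k \<le> w c z" unfolding w_def k_def by (intro ennreal_leI) simp
      then show ?thesis using True by simp
    qed simp
  qed
  finally have I2: "ennreal k * emeasure Z2 (B - D) \<le> (\<integral>\<^sup>+z. w c z * indicator (B - D) z \<partial>Z2)" .
  have "measure Z2 (D - B) = measure Z2 D - measure Z2 (D \<inter> B)"
    by (rule Z2p.finite_measure_Diff') auto
  moreover have "measure Z2 (B - D) = measure Z2 B - measure Z2 (B \<inter> D)"
    by (rule Z2p.finite_measure_Diff') auto
  ultimately have "measure Z2 (D - B) \<le> measure Z2 (B - D)" using le by (simp add: Int_commute)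
  then have "emeasure Z2 (D - B) \<le> emeasure Z2 (B - D)"
    by (simp add: Z2p.emeasure_eq_measure)
  then have I3: "ennreal k * emeasure Z2 (D - B) \<le> ennreal k * emeasure Z2 (B - D)"
    by (rule mult_left_mono) simp
  show ?thesis unfolding splitB splitD
    by (rule add_left_mono) (use I1' I2 I3 in \<open>blast intro: order_trans\<close>)
qed

lemma DB_fwer:
  assumes a: "0 < \<alpha>" "\<alpha> < 1" and P0: "Pr (0, 0) (DB \<alpha> t) any_rej = \<alpha>"
  shows "strong_fwer \<alpha> (DB \<alpha> t)"
  unfolding strong_fwer_def
proof
  fix th :: "real \<times> real"
  obtain a b where th: "th = (a, b)" by (cases th)
  define E where "E = {z \<in> space Z2. false_rej th (DB \<alpha> t (pvals th z))}"
  have Em: "E \<in> sets Z2" unfolding E_def by (rule ev_meas[OF DB_proc])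
  have PE: "Pr th (DB \<alpha> t) (false_rej th) = measure Z2 E" by (simp add: Pr_def E_def)
  have Qa: "Phi (Q \<alpha>) = \<alpha>" using Phi_Q a by simp
  consider "a \<ge> 0" "b \<ge> 0" | "a \<ge> 0" "b < 0" | "a < 0" "b \<ge> 0" | "a < 0" "b < 0" by linarith
  then show "Pr th (DB \<alpha> t) (false_rej th) \<le> \<alpha>"
  proof cases
    case 1
    define F where "F = {z \<in> space Z2. any_rej (DB \<alpha> t (pvals (0, 0) z))}"
    have m: "\<And>pp qq. pp \<in> unit_sq \<Longrightarrow> qq \<in> unit_sq \<Longrightarrow> fst pp \<le> fst qq \<Longrightarrow> snd pp \<le> snd qq \<Longrightarrow>
        (fst (DB \<alpha> t qq) \<longrightarrow> fst (DB \<alpha> t pp)) \<and> (snd (DB \<alpha> t qq) \<longrightarrow> snd (DB \<alpha> t pp))"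
      using DB_mono[of \<alpha> t] unfolding weakly_monotone_def by blast
    have "E \<subseteq> F"
    proof
      fix z assume "z \<in> E"
      then have fr: "false_rej th (DB \<alpha> t (pvals th z))" by (simp add: E_def)
      have le1: "Phi (fst z) \<le> Phi (a + fst z)" "Phi (snd z) \<le> Phi (b + snd z)"
        using 1 by (simp_all add: Phi_le_iff)
      have "(fst (DB \<alpha> t (pvals th z)) \<longrightarrow> fst (DB \<alpha> t (pvals (0,0) z))) \<and> (snd (DB \<alpha> t (pvals th z)) \<longrightarrow> snd (DB \<alpha> t (pvals (0,0) z)))"
        by (rule m[OF pvals_unit pvals_unit]) (use le1 in \<open>simp_all add: pvals_def th\<close>)
      then show "z \<in> F" using fr by (auto simp: F_def false_rej_def any_rej_def)
    qed
    then have "measure Z2 E \<le> measure Z2 F"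
      by (rule Z2p.finite_measure_mono) (simp add: F_def ev_meas'[OF DB_proc])
    moreover have "measure Z2 F = \<alpha>" using P0 by (simp add: Pr_def F_def)
    ultimately show ?thesis using PE by simp
  next
    case 2
    have "E \<subseteq> {..Q \<alpha>} \<times> UNIV"
    proof
      fix z assume "z \<in> E"
      then have "Phi (a + fst z) \<le> \<alpha>" using 2 by (simp add: E_def false_rej_def th DB_def pvals_def)
      moreover have "Phi (fst z) \<le> Phi (a + fst z)" using 2 by (simp add: Phi_le_iff)
      ultimately have "Phi (fst z) \<le> \<alpha>" by simp
      then have "fst z \<le> Q \<alpha>" using Phi_le_Q a by simp
      then show "z \<in> {..Q \<alpha>} \<times> UNIV" by (cases z) simp
    qed
    then have "measure Z2 E \<le> measure Z2 ({..Q \<alpha>} \<times> UNIV)"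
      by (rule Z2p.finite_measure_mono) (simp add: times_borel)
    also have "\<dots> = \<alpha>" using Z2_times[of "{..Q \<alpha>}" UNIV] meas_Iic Qa Zn.prob_space by simp
    finally show ?thesis using PE by simp
  next
    case 3
    have "E \<subseteq> UNIV \<times> {..Q \<alpha>}"
    proof
      fix z assume "z \<in> E"
      then have "Phi (b + snd z) \<le> \<alpha>" using 3 by (simp add: E_def false_rej_def th DB_def pvals_def)
      moreover have "Phi (snd z) \<le> Phi (b + snd z)" using 3 by (simp add: Phi_le_iff)
      ultimately have "Phi (snd z) \<le> \<alpha>" by simp
      then have "snd z \<le> Q \<alpha>" using Phi_le_Q a by simp
      then show "z \<in> UNIV \<times> {..Q \<alpha>}" by (cases z) simp
    qed
    then have "measure Z2 E \<le> measure Z2 (UNIV \<times> {..Q \<alpha>})"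
      by (rule Z2p.finite_measure_mono) (simp add: times_borel)
    also have "\<dots> = \<alpha>" using Z2_times[of UNIV "{..Q \<alpha>}"] meas_Iic Qa Zn.prob_space by simp
    finally show ?thesis using PE by simp
  next
    case 4
    then have "E = {}" by (simp add: E_def false_rej_def th)
    then show ?thesis using PE a by simp
  qed
qed

theorem mainTheorem5:
  fixes \<alpha> \<theta> t :: real
  assumes "0 < \<alpha>" and "\<alpha> < 1" and "\<theta> < 0"
    and "Pr (0, 0) (DB \<alpha> t) any_rej = \<alpha>"
  shows "is_procedure (DB \<alpha> t) \<and> weakly_monotone (DB \<alpha> t) \<and> marg_nominal \<alpha> (DB \<alpha> t)
    \<and> strong_fwer \<alpha> (DB \<alpha> t)
    \<and> (\<forall>D. is_procedure D \<and> strong_fwer \<alpha> D \<and> (marg_nominal \<alpha> D \<or> weakly_monotone D) \<longrightarrow>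
          Pr (\<theta>, \<theta>) (DB \<alpha> t) any_rej \<ge> Pr (\<theta>, \<theta>) D any_rej)"
proof -
  have P1: "is_procedure (DB \<alpha> t)" "weakly_monotone (DB \<alpha> t)" "marg_nominal \<alpha> (DB \<alpha> t)" "strong_fwer \<alpha> (DB \<alpha> t)"
    using DB_proc DB_mono DB_marg DB_fwer assms by auto
  have opt: "Pr (\<theta>, \<theta>) (DB \<alpha> t) any_rej \<ge> Pr (\<theta>, \<theta>) D any_rej"
    if D: "is_procedure D" "strong_fwer \<alpha> D" "marg_nominal \<alpha> D \<or> weakly_monotone D" for D
  proof -
    define SD where "SD = {x::real\<times>real. any_rej (D (Phi (fst x), Phi (snd x)))}"
    define SB where "SB = {x::real\<times>real. any_rej (DB \<alpha> t (Phi (fst x), Phi (snd x)))}"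
    define M where "M = {x::real\<times>real. Phi (fst x) \<le> \<alpha> \<or> Phi (snd x) \<le> \<alpha>}"
    have SDm: "SD \<in> sets borel" unfolding SD_def by (rule S_meas[OF D(1)])
    have SBm: "SB \<in> sets borel" unfolding SB_def by (rule S_meas[OF DB_proc])
    have SBeq: "SB = M \<inter> {x. fst x + snd x \<le> t}"
      by (auto simp: SB_def M_def DB_def any_rej_def Phi_inv_Phi)
    have DM: "SD \<subseteq> M" using rejM[OF D assms(1)] by (auto simp: SD_def M_def)
    have mD: "measure Z2 SD \<le> \<alpha>"
    proof -
      have "Pr (0,0) D (false_rej (0,0)) \<le> \<alpha>" using D(2) unfolding strong_fwer_def by blast
      moreover have "false_rej (0,0) = any_rej" by (auto simp: fun_eq_iff false_rej_def any_rej_def)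
      ultimately show ?thesis by (simp add: Pr_shift SD_def)
    qed
    have mB: "measure Z2 SB = \<alpha>" using assms(4) by (simp add: Pr_shift SB_def)
    have np: "(\<integral>\<^sup>+z. w \<theta> z * indicator SD z \<partial>Z2) \<le> (\<integral>\<^sup>+z. w \<theta> z * indicator SB z \<partial>Z2)"
      by (rule NP[OF assms(3) SBeq DM SBm SDm]) (simp add: mD mB)
    have "emeasure Z2 {z. (fst z + \<theta>, snd z + \<theta>) \<in> SD} \<le> emeasure Z2 {z. (fst z + \<theta>, snd z + \<theta>) \<in> SB}"
      using np by (simp add: Z2_shift SDm SBm)
    then have "measure Z2 {z. (fst z + \<theta>, snd z + \<theta>) \<in> SD} \<le> measure Z2 {z. (fst z + \<theta>, snd z + \<theta>) \<in> SB}"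
      by (simp add: Z2p.emeasure_eq_measure)
    then show ?thesis by (simp add: Pr_shift SD_def SB_def)
  qed
  show ?thesis using P1 opt by blast
qed

end
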